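(* Let $\mathcal M$ be a countable transitive model of $\mathsf{ZFC}'$ and let $\mathbb P\in\mathcal M$ be a forcing by Silver trees. Then there exists a countable forcing by Silver trees $\mathbb Q$ such that $\mathbb P\sqsubset_{\mathcal M}\mathbb Q$.
   Context: $\mathsf{ZFC}'$ is ZFC without the Power Set axiom, plus the axiom asserting that $\mathcal P(\omega)$ exists. $2^{<\omega}$ is the set of finite binary strings. A set $T\subseteq 2^{<\omega}$ is a Silver tree if there are strings $u_0,u_1,\dots$ such that $T$ consists exactly of all strings $u_0{}^\frown i_0{}^\frown\cdots{}^\frown u_m{}^\frown i_m$ ($m<\omega$, $i_k\in\{0,1\}$) and all their initial segments; $[T]\subseteq 2^\omega$ is the set of branches; $T\restriction u=\{t\in T:u\subseteq t\text{ or }t\subseteq u\}$. Actions of strings $\sigma$ on reals ($(\sigma\cdot x)(k)=x(k)+\sigma(k)\bmod2$ for $k<|\sigma|$, else $x(k)$) and on strings ($(\sigma\cdot t)(j)=t(j)+\sigma(j)\bmod 2$ for $j<\min(|\sigma|,|t|)$, else $t(j)$); $\sigma\cdot T=\{\sigma\cdot t:t\in T\}$. A forcing by Silver trees is a set of Silver trees closed under $T\mapsto T\restriction u$ ($u\in T$) and $T\mapsto\sigma\cdot T$, ordered by inclusion. For continuous $f:2^\omega\to2^\omega$, its code is $\langle K_{k,i}:k<\omega,i=0,1\rangle$ where $K_{k,i}$ is the set of $\subseteq$-minimal strings $s$ with $f(x)(k)=i$ for all $x\supset s$. $f$ is regular on $T_0\in\mathbb P$ inside $\mathbb P$ if there are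 no $T'\in\mathbb P$, $T'\subseteq T_0$, and $\sigma$ with $f(x)=\sigma\cdot x$ for all $x\in[T']$. $\mathbb P\sqsubset_{\mathcal M}\mathbb Q$ means: (A) $\mathbb Q$ is dense in $\mathbb Q\cup\mathbb P$; (B) if $D\in\mathcal M$, $D\subseteq\mathbb P$ is pre-dense in $\mathbb P$ and $U\in\mathbb Q$, then $U\subseteq\bigcup D'$ for some finite $D'\subseteq D$; (C) if $T_0\in\mathbb P$, $f$ is continuous with code in $\mathcal M$ and regular on $T_0$ inside $\mathbb P$, and $U,V\in\mathbb Q$, $U\subseteq T_0$, then $[V]\cap f[[U]]=\emptyset$. *)

theory Defs
  imports Main "HOL-Library.Countable_Set" "HOL-Library.Sublist"
begin

text \<open>Strings in 2^{<omega} are bool lists; reals in 2^omega are functions nat => bool.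
  Addition mod 2 is exclusive or, written as inequality on bool.\<close>

definition init :: "(nat \<Rightarrow> bool) \<Rightarrow> nat \<Rightarrow> bool list" where
  "init x n = map x [0..<n]"

definition silver_string :: "(nat \<Rightarrow> bool list) \<Rightarrow> (nat \<Rightarrow> bool) \<Rightarrow> nat \<Rightarrow> bool list" where
  "silver_string u i m = concat (map (\<lambda>k. u k @ [i k]) [0..<Suc m])"

definition silver_tree :: "bool list set \<Rightarrow> bool" where
  "silver_tree T \<longleftrightarrow> (\<exists>u :: nat \<Rightarrow> bool list.
      T = {t. \<exists>m i. prefix t (silver_string u i m)})"

definition branches :: "bool list set \<Rightarrow> (nat \<Rightarrow> bool) set" where
  "branches T = {x. \<forall>n. init x n \<in> T}"

definition restr :: "bool list set \<Rightarrow> bool list \<Rightarrow> bool list set" where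
  "restr T u = {t \<in> T. prefix u t \<or> prefix t u}"

definition act_real :: "bool list \<Rightarrow> (nat \<Rightarrow> bool) \<Rightarrow> (nat \<Rightarrow> bool)" where
  "act_real \<sigma> x = (\<lambda>k. if k < length \<sigma> then x k \<noteq> \<sigma> ! k else x k)"

definition act_str :: "bool list \<Rightarrow> bool list \<Rightarrow> bool list" where
  "act_str \<sigma> t = map (\<lambda>j. if j < length \<sigma> then t ! j \<noteq> \<sigma> ! j else t ! j) [0..<length t]"

definition act_tree :: "bool list \<Rightarrow> bool list set \<Rightarrow> bool list set" where
  "act_tree \<sigma> T = act_str \<sigma> ` T"

definition silver_forcing :: "bool list set set \<Rightarrow> bool" where
  "silver_forcing P \<longleftrightarrow> (\<forall>T\<in>P. silver_tree T) \<and>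
     (\<forall>T\<in>P. \<forall>u\<in>T. restr T u \<in> P) \<and>
     (\<forall>T\<in>P. \<forall>\<sigma>. act_tree \<sigma> T \<in> P)"

definition cantor_continuous :: "((nat \<Rightarrow> bool) \<Rightarrow> (nat \<Rightarrow> bool)) \<Rightarrow> bool" where
  "cantor_continuous f \<longleftrightarrow> (\<forall>x k. \<exists>n. \<forall>y. init y n = init x n \<longrightarrow> f y k = f x k)"

definition regular_on :: "((nat \<Rightarrow> bool) \<Rightarrow> (nat \<Rightarrow> bool)) \<Rightarrow> bool list set \<Rightarrow> bool list set set \<Rightarrow> bool" where
  "regular_on f T0 P \<longleftrightarrow>
     \<not> (\<exists>T'\<in>P. T' \<subseteq> T0 \<and> (\<exists>\<sigma>. \<forall>x\<in>branches T'. f x = act_real \<sigma> x))"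

definition predense :: "bool list set set \<Rightarrow> bool list set set \<Rightarrow> bool" where
  "predense D P \<longleftrightarrow> (\<forall>T\<in>P. \<exists>S\<in>D. \<exists>R\<in>P. R \<subseteq> T \<and> R \<subseteq> S)"

text \<open>The relation P \<sqsubset>_M Q, where the countable transitive model M is represented
  only through the countable family Dfam of sets (of trees) belonging to M and the
  countable family Ffam of continuous functions whose codes belong to M.\<close>
definition sqsub ::
  "bool list set set set \<Rightarrow> ((nat \<Rightarrow> bool) \<Rightarrow> (nat \<Rightarrow> bool)) set \<Rightarrow>
   bool list set set \<Rightarrow> bool list set set \<Rightarrow> bool" where
  "sqsub Dfam Ffam P Q \<longleftrightarrow>
     (\<forall>T\<in>Q \<union> P. \<exists>U\<in>Q. U \<subseteq> T) \<and>
     (\<forall>D\<in>Dfam. D \<subseteq> P \<longrightarrow> predense D P \<longrightarrow>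
         (\<forall>U\<in>Q. \<exists>D'. finite D' \<and> D' \<subseteq> D \<and> U \<subseteq> \<Union>D')) \<and>
     (\<forall>T0\<in>P. \<forall>f\<in>Ffam. cantor_continuous f \<longrightarrow> regular_on f T0 P \<longrightarrow>
         (\<forall>U\<in>Q. \<forall>V\<in>Q. U \<subseteq> T0 \<longrightarrow> branches V \<inter> f ` branches U = {}))"

end

theory Submission
  imports Defs
begin

lemma prefix_nth: "prefix a b \<longleftrightarrow> length a \<le> length b \<and> (\<forall>j<length a. a!j = b!j)"
proof
  assume "prefix a b" then show "length a \<le> length b \<and> (\<forall>j<length a. a!j = b!j)"
    by (auto simp: prefix_def nth_append)
next
  assume h: "length a \<le> length b \<and> (\<forall>j<length a. a!j = b!j)"
  then have "take (length a) b = a" by (auto intro: nth_equalityI)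
  then show "prefix a b" by (metis take_is_prefix)
qed

definition bitl :: "bool list \<Rightarrow> nat \<Rightarrow> bool" where
  "bitl s j = (j < length s \<and> s!j)"

lemma act_real_bit: "act_real \<sigma> x = (\<lambda>k. x k \<noteq> bitl \<sigma> k)"
  by (auto simp: act_real_def bitl_def)

lemma act_str_bit: "act_str \<sigma> t = map (\<lambda>j. t!j \<noteq> bitl \<sigma> j) [0..<length t]"
  by (auto simp: act_str_def bitl_def intro!: map_cong)

lemma length_act_str[simp]: "length (act_str \<sigma> t) = length t"
  by (simp add: act_str_def)

lemma nth_act_str[simp]: "j < length t \<Longrightarrow> act_str \<sigma> t ! j = (t!j \<noteq> bitl \<sigma> j)"
  by (simp add: act_str_bit)

lemma act_str_invol[simp]: "act_str \<sigma> (act_str \<sigma> t) = t"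
  by (auto intro: nth_equalityI)

lemma act_real_invol[simp]: "act_real \<sigma> (act_real \<sigma> x) = x"
  by (auto simp: act_real_bit)

lemma length_init[simp]: "length (init x n) = n" by (simp add: init_def)
lemma nth_init[simp]: "j < n \<Longrightarrow> init x n ! j = x j" by (simp add: init_def)

lemma init_act: "init (act_real \<sigma> x) n = act_str \<sigma> (init x n)"
  by (auto intro: nth_equalityI simp: act_real_bit)

lemma act_tree_invol[simp]: "act_tree \<sigma> (act_tree \<sigma> T) = T"
  by (auto simp: act_tree_def image_image)

lemma mem_act_tree: "t \<in> act_tree \<sigma> T \<longleftrightarrow> act_str \<sigma> t \<in> T"
  by (auto simp: act_tree_def) (metis act_str_invol image_eqI)

lemma act_tree_mono: "T \<subseteq> T' \<Longrightarrow> act_tree \<sigma> T \<subseteq> act_tree \<sigma> T'"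
  by (auto simp: act_tree_def)

lemma branches_act: "branches (act_tree \<sigma> T) = act_real \<sigma> ` branches T"
proof -
  have "x \<in> branches (act_tree \<sigma> T) \<longleftrightarrow> act_real \<sigma> x \<in> branches T" for x
    by (simp add: branches_def mem_act_tree init_act)
  then show ?thesis
    by (smt (verit, best) act_real_invol image_iff subsetI subset_antisym)
qed

lemma branches_mono: "T \<subseteq> T' \<Longrightarrow> branches T \<subseteq> branches T'"
  by (auto simp: branches_def)

definition xl :: "bool list \<Rightarrow> bool list \<Rightarrow> bool list" where
  "xl a b = map (\<lambda>j. bitl a j \<noteq> bitl b j) [0..<max (length a) (length b)]"

lemma bitl_xl: "bitl (xl a b) j = (bitl a j \<noteq> bitl b j)"
  by (auto simp: xl_def bitl_def)

lemma act_str_comp: "act_str a (act_str b t) = act_str (xl a b) t"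
  by (auto intro: nth_equalityI simp: bitl_xl)

lemma act_tree_comp: "act_tree a (act_tree b T) = act_tree (xl a b) T"
  by (simp add: act_tree_def image_image act_str_comp)

lemma act_real_comp: "act_real a (act_real b x) = act_real (xl a b) x"
  by (auto simp: act_real_bit bitl_xl)

definition flips :: "nat set \<Rightarrow> bool list" where
  "flips A = map (\<lambda>j. j \<in> A) [0..<Suc (Max (insert 0 A))]"

lemma bitl_flips: "finite A \<Longrightarrow> bitl (flips A) j = (j \<in> A)"
  proof -
  assume f: "finite A"
  have "j \<in> A \<Longrightarrow> j < Suc (Max (insert 0 A))" using f by (simp add: le_imp_less_Suc)
  then show ?thesis unfolding flips_def bitl_def by (auto simp del: upt_Suc)
qed

lemma prefix_act: "prefix (act_str \<sigma> a) (act_str \<sigma> b) \<longleftrightarrow> prefix a b"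
  unfolding prefix_nth length_act_str
  by (metis (no_types, lifting) nth_act_str order_less_le_trans)

lemma branch_restr: "x \<in> branches (restr T s) \<Longrightarrow> init x (length s) = s"
proof -
  assume "x \<in> branches (restr T s)"
  then have "init x (length s) \<in> restr T s" by (simp add: branches_def)
  then have "prefix s (init x (length s)) \<or> prefix (init x (length s)) s" by (simp add: restr_def)
  then show ?thesis by (metis length_init prefix_length_le prefix_order.antisym prefix_length_prefix prefix_order.refl)
qed

lemma restr_sub: "restr T s \<subseteq> T" by (auto simp: restr_def)

lemma sub_via_branches:
  assumes "\<forall>t\<in>T. \<exists>x\<in>branches T. t = init x (length t)" "branches T \<subseteq> branches T'"
  shows "T \<subseteq> T'"
proof
  fix t assume "t \<in> T"
  then obtain x where "x \<in> branches T" "t = init x (length t)" using assms(1) by blast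
  then have "x \<in> branches T'" using assms(2) by blast
  then have "init x (length t) \<in> T'" by (simp add: branches_def)
  then show "t \<in> T'" using \<open>t = init x (length t)\<close> by simp
qed

definition ST :: "(nat \<Rightarrow> bool) \<Rightarrow> nat set \<Rightarrow> bool list set" where
  "ST z K = {t. \<forall>j<length t. j \<notin> K \<longrightarrow> t!j = z j}"

lemma ss_Suc: "silver_string u i (Suc m) = silver_string u i m @ (u (Suc m) @ [i (Suc m)])"
  by (simp add: silver_string_def)

lemma ss_0: "silver_string u i 0 = u 0 @ [i 0]"
  by (simp add: silver_string_def)

lemma ss_formula:
  assumes sm: "strict_mono e" and u0: "u 0 = map z [0..<e 0]"
    and uS: "\<And>k. u (Suc k) = map z [Suc (e k)..<e (Suc k)]"
  shows "silver_string u i m = map (\<lambda>j. if j \<in> range e then i (inv e j) else z j) [0..<Suc (e m)]"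
proof (induction m)
  case 0
  have nr: "j \<notin> range e" if "j < e 0" for j
  proof
    assume "j \<in> range e" then obtain k where "j = e k" by auto
    moreover have "e 0 \<le> e k" using sm by (simp add: strict_mono_less_eq)
    ultimately show False using that by simp
  qed
  have "map (\<lambda>j. if j \<in> range e then i (inv e j) else z j) [0..<Suc (e 0)]
      = map (\<lambda>j. if j \<in> range e then i (inv e j) else z j) [0..<e 0] @ [i (inv e (e 0))]"
    by simp
  also have "map (\<lambda>j. if j \<in> range e then i (inv e j) else z j) [0..<e 0] = map z [0..<e 0]"
    using nr by (auto intro!: map_cong)
  also have "inv e (e 0) = 0" using strict_mono_imp_inj_on[OF sm] by (simp add: inv_f_f)
  finally show ?case by (simp add: ss_0 u0)
next
  case (Suc m)
  let ?h = "\<lambda>j. if j \<in> range e then i (inv e j) else z j"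
  have lt: "e m < e (Suc m)" using sm by (simp add: strict_mono_def)
  have nr: "j \<notin> range e" if "e m < j" "j < e (Suc m)" for j
  proof
    assume "j \<in> range e" then obtain k where k: "j = e k" by auto
    show False
    proof (cases "k \<le> m")
      case True then have "e k \<le> e m" using sm by (simp add: strict_mono_less_eq)
      then show False using that k by simp
    next
      case False then have "Suc m \<le> k" by simp
      then have "e (Suc m) \<le> e k" using sm by (simp add: strict_mono_less_eq)
      then show False using that k by simp
    qed
  qed
  have "[0..<Suc (e (Suc m))] = [0..<Suc (e m)] @ [Suc (e m)..<e (Suc m)] @ [e (Suc m)]"
  proof -
    have "[0..<e (Suc m)] = [0..<Suc (e m)] @ [Suc (e m)..<e (Suc m)]"
      using upt_add_eq_append[of 0 "Suc (e m)" "e (Suc m) - Suc (e m)"] lt by simp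
    then show ?thesis by simp
  qed
  then have "map ?h [0..<Suc (e (Suc m))] = map ?h [0..<Suc (e m)] @ map ?h [Suc (e m)..<e (Suc m)] @ [?h (e (Suc m))]"
    by simp
  also have "map ?h [Suc (e m)..<e (Suc m)] = u (Suc m)"
    using nr by (auto simp: uS intro!: map_cong)
  also have "?h (e (Suc m)) = i (Suc m)" using strict_mono_imp_inj_on[OF sm] by (simp add: inv_f_f)
  finally show ?case using Suc by (simp add: ss_Suc)
qed

lemma silver_eq_ST:
  assumes sm: "strict_mono e" and u0: "u 0 = map z [0..<e 0]"
    and uS: "\<And>k. u (Suc k) = map z [Suc (e k)..<e (Suc k)]"
  shows "{t. \<exists>m i. prefix t (silver_string u i m)} = ST z (range e)"
proof
  show "{t. \<exists>m i. prefix t (silver_string u i m)} \<subseteq> ST z (range e)"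
  proof
    fix t assume "t \<in> {t. \<exists>m i. prefix t (silver_string u i m)}"
    then obtain m i where p: "prefix t (silver_string u i m)" by auto
    show "t \<in> ST z (range e)"
      unfolding ST_def
    proof (intro CollectI allI impI)
      fix j assume j: "j < length t" "j \<notin> range e"
      have "t ! j = silver_string u i m ! j" using p j(1) by (simp add: prefix_nth)
      also have "\<dots> = z j"
      proof -
        have "length t \<le> Suc (e m)" using prefix_length_le[OF p] by (simp add: ss_formula[OF sm u0 uS])
        then have "j < Suc (e m)" using j by simp
        then show ?thesis using j(2) by (simp add: ss_formula[OF sm u0 uS] del: upt_Suc)
      qed
      finally show "t ! j = z j" .
    qed
  qed
next
  show "ST z (range e) \<subseteq> {t. \<exists>m i. prefix t (silver_string u i m)}"
  proof
    fix t assume t: "t \<in> ST z (range e)"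
    define m where "m = length t"
    define i where "i = (\<lambda>k. if e k < length t then t ! (e k) else False)"
    have em: "m \<le> e m" using sm by (simp add: strict_mono_imp_increasing)
    have "prefix t (silver_string u i m)"
      unfolding ss_formula[OF sm u0 uS] prefix_nth
    proof (intro conjI allI impI)
      show "length t \<le> length (map (\<lambda>j. if j \<in> range e then i (inv e j) else z j) [0..<Suc (e m)])"
        using em m_def by simp
      fix j assume j: "j < length t"
      then have jl: "j < Suc (e m)" using em m_def by simp
      show "t ! j = map (\<lambda>j. if j \<in> range e then i (inv e j) else z j) [0..<Suc (e m)] ! j"
      proof (cases "j \<in> range e")
        case True
        then obtain k where k: "j = e k" by auto
        have "inv e j = k" using k strict_mono_imp_inj_on[OF sm] by (simp add: inv_f_f)
        then show ?thesis using True jl j k i_def by (simp del: upt_Suc)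
      next
        case False
        then show ?thesis using t j jl by (simp del: upt_Suc add: ST_def)
      qed
    qed
    then show "t \<in> {t. \<exists>m i. prefix t (silver_string u i m)}" by auto
  qed
qed

lemma ST_silver_tree:
  assumes inf: "infinite K" shows "silver_tree (ST z K)"
proof -
  define e where "e = enumerate K"
  have sm: "strict_mono e" using strict_mono_enumerate[OF inf] e_def by simp
  have re: "range e = K" using range_enumerate[OF inf] e_def by simp
  define u where "u = (\<lambda>k. if k = 0 then map z [0..<e 0] else map z [Suc (e (k-1))..<e k])"
  have "{t. \<exists>m i. prefix t (silver_string u i m)} = ST z (range e)"
    by (rule silver_eq_ST[OF sm]) (simp_all add: u_def)
  then have "ST z K = {t. \<exists>m i. prefix t (silver_string u i m)}" using re by simp
  then show ?thesis unfolding silver_tree_def by blast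
qed

lemma silver_tree_ST:
  assumes "silver_tree T" shows "\<exists>z K. infinite K \<and> T = ST z K"
proof -
  obtain u where T: "T = {t. \<exists>m i. prefix t (silver_string u i m)}"
    using assms silver_tree_def by auto
  define e where "e = rec_nat (length (u 0)) (\<lambda>k ek. ek + Suc (length (u (Suc k))))"
  have e0: "e 0 = length (u 0)" by (simp add: e_def)
  have eS: "e (Suc k) = e k + Suc (length (u (Suc k)))" for k by (simp add: e_def)
  have sm: "strict_mono e" unfolding strict_mono_Suc_iff using eS by simp
  define L where "L = (\<lambda>j. LEAST k. j \<le> e k)"
  define z where "z = (\<lambda>j. if L j = 0 then u 0 ! j else u (L j) ! (j - Suc (e (L j - 1))))"
  have L0: "L j = 0" if "j \<le> e 0" for j
    unfolding L_def using that by (intro Least_equality) auto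
  have LS: "L j = Suc k" if "e k < j" "j \<le> e (Suc k)" for j k
    unfolding L_def
  proof (rule Least_equality)
    show "j \<le> e (Suc k)" by fact
    fix y assume "j \<le> e y"
    show "Suc k \<le> y"
    proof (rule ccontr)
      assume "\<not> Suc k \<le> y" then have "y \<le> k" by simp
      then have "e y \<le> e k" using sm by (simp add: strict_mono_less_eq)
      then show False using that \<open>j \<le> e y\<close> by simp
    qed
  qed
  have u0: "u 0 = map z [0..<e 0]"
  proof (rule nth_equalityI)
    show "length (u 0) = length (map z [0..<e 0])" by (simp add: e0)
    fix j assume "j < length (u 0)"
    then show "u 0 ! j = map z [0..<e 0] ! j" using L0[of j] by (simp add: z_def e0)
  qed
  have uS: "u (Suc k) = map z [Suc (e k)..<e (Suc k)]" for k
  proof (rule nth_equalityI)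
    show "length (u (Suc k)) = length (map z [Suc (e k)..<e (Suc k)])"
      by (simp only: length_map length_upt eS)
    fix n assume n: "n < length (u (Suc k))"
    have "L (Suc (e k) + n) = Suc k" using n by (intro LS) (auto simp: eS)
    have "map z [Suc (e k)..<e (Suc k)] ! n = z (Suc (e k) + n)"
      using n by (intro nth_map_upt) (simp add: eS)
    also have "\<dots> = u (Suc k) ! n" using \<open>L (Suc (e k) + n) = Suc k\<close> by (simp add: z_def)
    finally show "u (Suc k) ! n = map z [Suc (e k)..<e (Suc k)] ! n" by simp
  qed
  have "T = ST z (range e)" using silver_eq_ST[OF sm u0 uS] T by simp
  moreover have "infinite (range e)"
    using range_inj_infinite strict_mono_imp_inj_on[OF sm] by blast
  ultimately show ?thesis by blast
qed

lemma mem_ST: "t \<in> ST z K \<longleftrightarrow> (\<forall>j<length t. j \<notin> K \<longrightarrow> t!j = z j)"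
  by (simp add: ST_def)

lemma init_ST: "init x n \<in> ST z K \<longleftrightarrow> (\<forall>j<n. j \<notin> K \<longrightarrow> x j = z j)"
  by (simp add: ST_def)

lemma branches_ST: "branches (ST z K) = {x. \<forall>j. j \<notin> K \<longrightarrow> x j = z j}"
proof (intro set_eqI iffI)
  fix x assume "x \<in> branches (ST z K)"
  then have "\<forall>n. init x n \<in> ST z K" by (simp add: branches_def)
  have "x j = z j" if "j \<notin> K" for j
  proof -
    have "init x (Suc j) \<in> ST z K" using \<open>\<forall>n. init x n \<in> ST z K\<close> by blast
    then show ?thesis using that unfolding init_ST by blast
  qed
  then show "x \<in> {x. \<forall>j. j \<notin> K \<longrightarrow> x j = z j}" by blast
qed (auto simp: branches_def init_ST)

lemma ST_ext: "t \<in> ST z K \<Longrightarrow> \<exists>x\<in>branches (ST z K). t = init x (length t)"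
proof -
  assume t: "t \<in> ST z K"
  define x where "x = (\<lambda>j. if j < length t then t!j else z j)"
  have "x \<in> branches (ST z K)" unfolding branches_ST x_def using t by (auto simp: mem_ST)
  moreover have "t = init x (length t)" by (auto intro: nth_equalityI simp: x_def)
  ultimately show ?thesis by blast
qed

lemma ST_cong: "(\<And>j. j \<notin> K \<Longrightarrow> z j = z' j) \<Longrightarrow> ST z K = ST z' K"
  by (auto simp: ST_def)

lemma act_ST: "act_tree \<sigma> (ST z K) = ST (act_real \<sigma> z) K"
  by (auto simp: mem_act_tree ST_def act_real_bit)

lemma restr_ST:
  assumes s: "s \<in> ST z K"
  shows "restr (ST z K) s = ST (\<lambda>j. if j < length s then s!j else z j) (K - {..<length s})"
proof (intro set_eqI iffI)
  fix t assume "t \<in> restr (ST z K) s"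
  then have t: "t \<in> ST z K" and c: "prefix s t \<or> prefix t s" by (auto simp: restr_def)
  show "t \<in> ST (\<lambda>j. if j < length s then s!j else z j) (K - {..<length s})"
    unfolding mem_ST
  proof (intro allI impI)
    fix j assume j: "j < length t" "j \<notin> K - {..<length s}"
    show "t ! j = (if j < length s then s ! j else z j)"
    proof (cases "j < length s")
      case True then show ?thesis using c j by (auto simp: prefix_nth)
    next
      case False then show ?thesis using t j by (auto simp: mem_ST)
    qed
  qed
next
  fix t assume t: "t \<in> ST (\<lambda>j. if j < length s then s!j else z j) (K - {..<length s})"
  have tj: "t ! j = s ! j" if "j < length t" "j < length s" for j
    using t that by (auto simp: mem_ST)
  have "t \<in> ST z K" unfolding mem_ST
  proof (intro allI impI)
    fix j assume j: "j < length t" "j \<notin> K"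
    show "t ! j = z j"
    proof (cases "j < length s")
      case True then show ?thesis using tj j s by (auto simp: mem_ST)
    next
      case False then show ?thesis using t j by (auto simp: mem_ST)
    qed
  qed
  moreover have "prefix s t \<or> prefix t s"
  proof (cases "length s \<le> length t")
    case True then show ?thesis using tj by (auto simp: prefix_nth)
  next
    case False then show ?thesis using tj by (auto simp: prefix_nth)
  qed
  ultimately show "t \<in> restr (ST z K) s" by (simp add: restr_def)
qed

definition Kset :: "bool list set \<Rightarrow> nat set" where
  "Kset T = {j. (\<exists>t\<in>T. j < length t \<and> t!j) \<and> (\<exists>t\<in>T. j < length t \<and> \<not> t!j)}"

definition zval :: "bool list set \<Rightarrow> nat \<Rightarrow> bool" where
  "zval T j = (\<exists>t\<in>T. j < length t \<and> t!j)"

lemma Kset_ST: "Kset (ST z K) = K"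
proof (intro set_eqI iffI)
  fix j assume "j \<in> Kset (ST z K)"
  then obtain t1 t2 where "t1 \<in> ST z K" "j < length t1" "t1!j" "t2 \<in> ST z K" "j < length t2" "\<not> t2!j"
    by (auto simp: Kset_def)
  then show "j \<in> K" unfolding mem_ST by metis
next
  fix j assume j: "j \<in> K"
  have "init (z(j:=True)) (Suc j) \<in> ST z K" "init (z(j:=False)) (Suc j) \<in> ST z K"
    using j by (auto simp: init_ST)
  moreover have "j < length (init (z(j:=True)) (Suc j))" "init (z(j:=True)) (Suc j) ! j"
    "j < length (init (z(j:=False)) (Suc j))" "\<not> init (z(j:=False)) (Suc j) ! j" by auto
  ultimately show "j \<in> Kset (ST z K)" unfolding Kset_def by blast
qed

lemma zval_ST: "j \<notin> K \<Longrightarrow> zval (ST z K) j = z j"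
proof -
  assume j: "j \<notin> K"
  have "init z (Suc j) \<in> ST z K" by (simp add: init_ST)
  moreover have "j < length (init z (Suc j))" "init z (Suc j) ! j = z j" by auto
  have a: "\<forall>t\<in>ST z K. j < length t \<longrightarrow> t!j = z j" using j by (auto simp: mem_ST)
  show ?thesis unfolding zval_def
  proof
    assume "\<exists>t\<in>ST z K. j < length t \<and> t!j" then show "z j" using a by blast
  next
    assume "z j" then show "\<exists>t\<in>ST z K. j < length t \<and> t!j"
      using calculation by (intro bexI[of _ "init z (Suc j)"]) auto
  qed
qed

lemma ST_canon: "ST z K = ST (zval (ST z K)) (Kset (ST z K))"
  unfolding Kset_ST by (rule ST_cong) (simp add: zval_ST)

lemma canon: assumes "silver_tree T"
  shows "T = ST (zval T) (Kset T)" "infinite (Kset T)"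
proof -
  obtain z K where K: "infinite K" "T = ST z K" using silver_tree_ST[OF assms] by blast
  then show "T = ST (zval T) (Kset T)" using ST_canon by metis
  show "infinite (Kset T)" using K Kset_ST by metis
qed

lemma silver_ext: "silver_tree T \<Longrightarrow> t \<in> T \<Longrightarrow> \<exists>x\<in>branches T. t = init x (length t)"
  by (metis canon(1) ST_ext)

lemma silver_sub: "silver_tree T \<Longrightarrow> branches T \<subseteq> branches T' \<Longrightarrow> T \<subseteq> T'"
  using sub_via_branches silver_ext by metis

lemma silver_nonempty: "silver_tree T \<Longrightarrow> \<exists>x. x \<in> branches T"
proof -
  assume "silver_tree T"
  then have "T = ST (zval T) (Kset T)" by (rule canon)
  moreover have "zval T \<in> branches (ST (zval T) (Kset T))" by (simp add: branches_ST)
  ultimately have "zval T \<in> branches T" by simp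
  then show ?thesis by blast
qed

lemma silver_restr:
  assumes "silver_tree T" "s \<in> T"
  shows "silver_tree (restr T s)" "Kset (restr T s) = Kset T - {..<length s}"
proof -
  have T: "T = ST (zval T) (Kset T)" "infinite (Kset T)" using canon assms(1) by auto
  have s: "s \<in> ST (zval T) (Kset T)" using T assms(2) by simp
  have r: "restr T s = ST (\<lambda>j. if j < length s then s!j else zval T j) (Kset T - {..<length s})"
    using restr_ST[OF s] T(1) by simp
  have "infinite (Kset T - {..<length s})" using T(2) by simp
  then show "silver_tree (restr T s)" using r ST_silver_tree by simp
  show "Kset (restr T s) = Kset T - {..<length s}" using r Kset_ST by simp
qed

lemma silver_act: "silver_tree T \<Longrightarrow> silver_tree (act_tree \<sigma> T)"
  by (metis canon act_ST ST_silver_tree)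

lemma silver_bit: "silver_tree R \<Longrightarrow> t \<in> R \<Longrightarrow> j < length t \<Longrightarrow> j \<notin> Kset R \<Longrightarrow> t!j = zval R j"
  by (metis canon(1) mem_ST)

lemma zval_mono:
  assumes "silver_tree R'" "silver_tree R" "R' \<subseteq> R" "j \<notin> Kset R"
  shows "zval R' j = zval R j"
proof -
  obtain x where x: "x \<in> branches R'" using silver_nonempty assms(1) by blast
  then have w: "init x (Suc j) \<in> R'" by (simp add: branches_def)
  have all: "\<forall>t\<in>R'. j < length t \<longrightarrow> t!j = zval R j" using silver_bit assms by blast
  show ?thesis unfolding zval_def[of R']
  proof
    assume "\<exists>t\<in>R'. j < length t \<and> t ! j" then show "zval R j" using all by blast
  next
    assume "zval R j"
    then have "init x (Suc j) ! j" using all w by simp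
    then show "\<exists>t\<in>R'. j < length t \<and> t ! j" using w by (intro bexI[of _ "init x (Suc j)"]) auto
  qed
qed

lemma Kset_mono: "R' \<subseteq> R \<Longrightarrow> Kset R' \<subseteq> Kset R"
  unfolding Kset_def by blast

definition firstfree :: "bool list set \<Rightarrow> nat" where
  "firstfree R = (LEAST j. j \<in> Kset R)"

lemma firstfree_in: "silver_tree R \<Longrightarrow> firstfree R \<in> Kset R"
proof -
  assume "silver_tree R"
  then have "infinite (Kset R)" by (rule canon)
  then obtain j where "j \<in> Kset R" using infinite_imp_nonempty by blast
  then show ?thesis unfolding firstfree_def by (rule LeastI)
qed

lemma below_firstfree: "j < firstfree R \<Longrightarrow> j \<notin> Kset R"
  unfolding firstfree_def using not_less_Least by blast

lemma firstfree_mono: "silver_tree R' \<Longrightarrow> R' \<subseteq> R \<Longrightarrow> firstfree R \<le> firstfree R'"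
proof -
  assume "silver_tree R'" "R' \<subseteq> R"
  then have "firstfree R' \<in> Kset R" using firstfree_in Kset_mono by blast
  then show ?thesis unfolding firstfree_def[of R] by (rule Least_le)
qed

definition frz :: "bool list set \<Rightarrow> bool list set" where
  "frz R = restr R (init (zval R) (Suc (firstfree R)))"

lemma frz_mem: "silver_tree R \<Longrightarrow> init (zval R) (Suc (firstfree R)) \<in> R"
  by (metis canon(1) init_ST)

lemma frz_sub: "frz R \<subseteq> R" by (simp add: frz_def restr_sub)

lemma frz_silver: "silver_tree R \<Longrightarrow> silver_tree (frz R)"
  unfolding frz_def using silver_restr frz_mem by blast

lemma frz_firstfree: assumes "silver_tree R" shows "firstfree R < firstfree (frz R)"
proof -
  have K: "Kset (frz R) = Kset R - {..<Suc (firstfree R)}"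
    unfolding frz_def using silver_restr(2)[OF assms frz_mem[OF assms]] by simp
  have "firstfree (frz R) \<in> Kset (frz R)" using firstfree_in frz_silver assms by blast
  then show ?thesis using K by auto
qed

lemma act_free: assumes "silver_tree R" "p \<in> Kset R"
  shows "act_tree (flips {p}) R = R"
proof -
  have R: "R = ST (zval R) (Kset R)" using canon assms by auto
  have "act_tree (flips {p}) R = ST (act_real (flips {p}) (zval R)) (Kset R)"
    using act_ST R by metis
  also have "\<dots> = ST (zval R) (Kset R)"
    by (rule ST_cong) (use assms(2) in \<open>auto simp: act_real_bit bitl_flips\<close>)
  finally show ?thesis using R by simp
qed

lemma act_flips_empty[simp]: "act_tree (flips {}) T = T"
proof -
  have "act_str (flips {}) t = t" for t by (auto intro: nth_equalityI simp: bitl_flips)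
  then show ?thesis by (simp add: act_tree_def)
qed

lemma act_real_flips_empty[simp]: "act_real (flips {}) x = x"
  by (simp add: act_real_bit bitl_flips)

lemma init_eq_iff: "init a m = init b m \<longleftrightarrow> (\<forall>j<m. a j = b j)"
proof
  assume h: "init a m = init b m"
  show "\<forall>j<m. a j = b j"
  proof (intro allI impI)
    fix j assume "j < m"
    then have "init a m ! j = a j" "init b m ! j = b j" by simp_all
    then show "a j = b j" using h by simp
  qed
next
  assume "\<forall>j<m. a j = b j"
  then show "init a m = init b m" by (intro nth_equalityI) simp_all
qed

lemma restr_act: "restr (act_tree \<sigma> X) u = act_tree \<sigma> (restr X (act_str \<sigma> u))"
proof -
  have "t \<in> restr (act_tree \<sigma> X) u \<longleftrightarrow> t \<in> act_tree \<sigma> (restr X (act_str \<sigma> u))" for t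
  proof -
    have "t \<in> restr (act_tree \<sigma> X) u \<longleftrightarrow> act_str \<sigma> t \<in> X \<and> (prefix u t \<or> prefix t u)"
      by (simp add: restr_def mem_act_tree)
    also have "\<dots> \<longleftrightarrow> act_str \<sigma> t \<in> X \<and> (prefix (act_str \<sigma> u) (act_str \<sigma> t) \<or> prefix (act_str \<sigma> t) (act_str \<sigma> u))"
      by (simp add: prefix_act)
    also have "\<dots> \<longleftrightarrow> t \<in> act_tree \<sigma> (restr X (act_str \<sigma> u))"
      by (simp add: restr_def mem_act_tree)
    finally show ?thesis .
  qed
  then show ?thesis by blast
qed

lemma restr_restr1: "prefix s v \<Longrightarrow> restr (restr Y s) v = restr Y v"
proof -
  assume sv: "prefix s v"
  have "t \<in> restr (restr Y s) v \<longleftrightarrow> t \<in> restr Y v" for t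
  proof
    assume "t \<in> restr (restr Y s) v" then show "t \<in> restr Y v" by (simp add: restr_def)
  next
    assume t: "t \<in> restr Y v"
    then have "prefix v t \<or> prefix t v" by (simp add: restr_def)
    then have "prefix s t \<or> prefix t s"
      using sv prefix_same_cases prefix_order.trans by blast
    then show "t \<in> restr (restr Y s) v" using t by (simp add: restr_def)
  qed
  then show ?thesis by blast
qed

lemma restr_restr2: "prefix v s \<Longrightarrow> restr (restr Y s) v = restr Y s"
proof -
  assume vs: "prefix v s"
  have "t \<in> restr (restr Y s) v \<longleftrightarrow> t \<in> restr Y s" for t
  proof
    assume "t \<in> restr (restr Y s) v" then show "t \<in> restr Y s" by (simp add: restr_def)
  next
    assume t: "t \<in> restr Y s"
    then have "prefix s t \<or> prefix t s" by (simp add: restr_def)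
    then have "prefix v t \<or> prefix t v"
      using vs prefix_same_cases prefix_order.trans by blast
    then show "t \<in> restr (restr Y s) v" using t by (simp add: restr_def)
  qed
  then show ?thesis by blast
qed

lemma restr_nil: "restr Y [] = Y" by (auto simp: restr_def)

lemma act_nil: "act_tree [] Y = Y"
proof -
  have "act_str [] t = t" for t by (auto intro: nth_equalityI simp: bitl_def)
  then show ?thesis by (simp add: act_tree_def)
qed

lemma branches_restr_sub: "branches (restr X s) \<subseteq> branches X"
  by (rule branches_mono[OF restr_sub])

lemma act_str_bitl_cong: "(\<And>j. bitl a j = bitl b j) \<Longrightarrow> act_str a t = act_str b t"
  by (simp add: act_str_bit)

lemma act_tree_bitl_cong: "(\<And>j. bitl a j = bitl b j) \<Longrightarrow> act_tree a T = act_tree b T"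
proof -
  assume h: "\<And>j. bitl a j = bitl b j"
  have "act_str a = act_str b" by (rule ext) (simp add: act_str_bit h)
  then show ?thesis by (simp add: act_tree_def)
qed

lemma act_flips_insert:
  assumes "finite A" "p \<notin> A"
  shows "act_tree (flips (insert p A)) T = act_tree (flips A) (act_tree (flips {p}) T)"
proof -
  have "act_tree (flips A) (act_tree (flips {p}) T) = act_tree (xl (flips A) (flips {p})) T"
    by (rule act_tree_comp)
  also have "\<dots> = act_tree (flips (insert p A)) T"
    by (rule act_tree_bitl_cong) (use assms in \<open>auto simp: bitl_xl bitl_flips\<close>)
  finally show ?thesis by simp
qed

locale cons =
  fixes P :: "bool list set set"
    and Dfam :: "bool list set set set"
    and Ffam :: "((nat \<Rightarrow> bool) \<Rightarrow> (nat \<Rightarrow> bool)) set"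
  assumes sf: "silver_forcing P" and cP: "countable P" and ne: "P \<noteq> {}"
    and cD: "countable Dfam" and cF: "countable Ffam"
begin

lemma P_silver: "T \<in> P \<Longrightarrow> silver_tree T"
  using sf unfolding silver_forcing_def by blast

lemma P_restr: "T \<in> P \<Longrightarrow> u \<in> T \<Longrightarrow> restr T u \<in> P"
  using sf unfolding silver_forcing_def by blast

lemma P_act: "T \<in> P \<Longrightarrow> act_tree \<sigma> T \<in> P"
  using sf unfolding silver_forcing_def by blast

definition pe :: "nat \<Rightarrow> bool list set" where "pe = from_nat_into P"
definition dE :: "nat \<Rightarrow> bool list set set" where "dE = from_nat_into Dfam"
definition fE :: "nat \<Rightarrow> ((nat \<Rightarrow> bool) \<Rightarrow> (nat \<Rightarrow> bool))" where "fE = from_nat_into Ffam"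
definition sE :: "nat \<Rightarrow> bool list" where "sE = from_nat"

lemma pe_P: "pe n \<in> P" unfolding pe_def using ne by (rule from_nat_into)

lemma pe_surj: "T \<in> P \<Longrightarrow> \<exists>n. pe n = T"
  unfolding pe_def by (rule from_nat_into_surj[OF cP])

lemma dE_surj: "D \<in> Dfam \<Longrightarrow> \<exists>n. dE n = D"
  unfolding dE_def by (rule from_nat_into_surj[OF cD])

lemma fE_surj: "f \<in> Ffam \<Longrightarrow> \<exists>n. fE n = f"
  unfolding fE_def by (rule from_nat_into_surj[OF cF])

lemma sE_surj: "\<exists>n. sE n = \<sigma>"
  unfolding sE_def by (rule exI[of _ "to_nat \<sigma>"]) simp

lemma TS:
  assumes f: "cantor_continuous f" and c: "c \<in> P" and d: "d \<in> P"
  shows "\<exists>c'\<in>P. c' \<subseteq> c \<and> (\<exists>d'\<in>P. d' \<subseteq> d \<and> branches d' \<inter> f ` branches c' = {})"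
proof -
  obtain x where x: "x \<in> branches c" using silver_nonempty P_silver c by blast
  have dc: "d = ST (zval d) (Kset d)" "infinite (Kset d)" using canon P_silver d by auto
  obtain q where q: "q \<in> Kset d" using dc(2) infinite_imp_nonempty by blast
  define y' where "y' = (zval d)(q := \<not> f x q)"
  have "y' \<in> branches (ST (zval d) (Kset d))" using q unfolding branches_ST y'_def by auto
  then have y': "y' \<in> branches d" using dc(1) by simp
  obtain m where m: "\<forall>x'. init x' m = init x m \<longrightarrow> f x' q = f x q"
    using f unfolding cantor_continuous_def by blast
  define c' where "c' = restr c (init x m)"
  define d' where "d' = restr d (init y' (Suc q))"
  have "init x m \<in> c" using x by (simp add: branches_def)
  then have c'P: "c' \<in> P" using P_restr c c'_def by blast
  have "init y' (Suc q) \<in> d" using y' by (simp add: branches_def)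
  then have d'P: "d' \<in> P" using P_restr d d'_def by blast
  have "branches d' \<inter> f ` branches c' = {}"
  proof (rule ccontr)
    assume "branches d' \<inter> f ` branches c' \<noteq> {}"
    then obtain w x'' where w: "w \<in> branches d'" "x'' \<in> branches c'" "w = f x''" by blast
    have "init x'' m = init x m" using branch_restr w(2) c'_def by fastforce
    then have "f x'' q = f x q" using m by blast
    moreover have "init w (Suc q) = init y' (Suc q)" using branch_restr w(1) d'_def by fastforce
    then have "w q = y' q" unfolding init_eq_iff by simp
    ultimately show False using w(3) y'_def by simp
  qed
  moreover have "c' \<subseteq> c" "d' \<subseteq> d" using c'_def d'_def restr_sub by auto
  ultimately show ?thesis using c'P d'P by meson
qed

lemma OS:
  assumes f: "cantor_continuous f" and R: "R \<in> P" and reg: "regular_on f R P"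
  shows "\<exists>R''\<in>P. R'' \<subseteq> R \<and> branches (act_tree \<psi> R'') \<inter> f ` branches R'' = {}"
proof -
  have "\<not> (\<forall>x\<in>branches R. f x = act_real \<psi> x)" using reg R unfolding regular_on_def by blast
  then obtain x where x: "x \<in> branches R" "f x \<noteq> act_real \<psi> x" by blast
  then obtain q where q: "f x q \<noteq> act_real \<psi> x q" by blast
  obtain m0 where m0: "\<forall>x'. init x' m0 = init x m0 \<longrightarrow> f x' q = f x q"
    using f unfolding cantor_continuous_def by blast
  define m where "m = max m0 (Suc q)"
  define R'' where "R'' = restr R (init x m)"
  have "init x m \<in> R" using x by (simp add: branches_def)
  then have RP: "R'' \<in> P" using P_restr R R''_def by blast
  have "branches (act_tree \<psi> R'') \<inter> f ` branches R'' = {}"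
  proof (rule ccontr)
    assume "branches (act_tree \<psi> R'') \<inter> f ` branches R'' \<noteq> {}"
    then obtain w x' where w: "w \<in> branches (act_tree \<psi> R'')" "x' \<in> branches R''" "w = f x'" by blast
    have "init x' m = init x m" using branch_restr w(2) R''_def by fastforce
    then have "init x' m0 = init x m0" unfolding init_eq_iff m_def by simp
    then have fx: "f x' q = f x q" using m0 by blast
    obtain x'' where x'': "x'' \<in> branches R''" "w = act_real \<psi> x''" using w(1) branches_act by blast
    have "init x'' m = init x m" using branch_restr x''(1) R''_def by fastforce
    then have "x'' q = x q" unfolding init_eq_iff m_def by simp
    then have "w q = act_real \<psi> x q" using x''(2) by (simp add: act_real_bit)
    then show False using fx q w(3) by simp
  qed
  moreover have "R'' \<subseteq> R" using R''_def restr_sub by auto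
  ultimately show ?thesis using RP by meson
qed

end

datatype tsk = TB nat nat nat "nat set" | TP nat nat nat nat nat nat "nat set" "nat set"

definition lst :: "'a set \<Rightarrow> 'a list" where "lst S = (SOME xs. set xs = S)"

lemma set_lst: "finite S \<Longrightarrow> set (lst S) = S"
  unfolding lst_def by (rule someI_ex) (rule finite_list)

context cons
begin

definition allP :: "(nat \<Rightarrow> bool list set) \<Rightarrow> bool" where
  "allP R \<longleftrightarrow> (\<forall>i. R i \<in> P)"

definition shr :: "(nat \<Rightarrow> bool list set) \<Rightarrow> (nat \<Rightarrow> bool list set) \<Rightarrow> bool" where
  "shr R' R \<longleftrightarrow> (\<forall>i. R' i \<in> P \<and> R' i \<subseteq> R i)"

lemma shr_refl: "allP R \<Longrightarrow> shr R R" by (simp add: allP_def shr_def)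
lemma shr_trans: "shr R'' R' \<Longrightarrow> shr R' R \<Longrightarrow> shr R'' R" by (auto simp: shr_def)
lemma shr_allP: "shr R' R \<Longrightarrow> allP R'" by (simp add: allP_def shr_def)

definition cone :: "bool list \<Rightarrow> bool list \<Rightarrow> bool list set \<Rightarrow> bool list set" where
  "cone \<sigma> \<rho> X = act_tree \<sigma> (act_tree \<rho> X)"

definition uncone :: "bool list \<Rightarrow> bool list \<Rightarrow> bool list set \<Rightarrow> bool list set" where
  "uncone \<sigma> \<rho> X = act_tree \<rho> (act_tree \<sigma> X)"

lemma cone_uncone[simp]: "cone \<sigma> \<rho> (uncone \<sigma> \<rho> X) = X" by (simp add: cone_def uncone_def)
lemma uncone_cone[simp]: "uncone \<sigma> \<rho> (cone \<sigma> \<rho> X) = X" by (simp add: cone_def uncone_def)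
lemma cone_mono: "X \<subseteq> Y \<Longrightarrow> cone \<sigma> \<rho> X \<subseteq> cone \<sigma> \<rho> Y" by (simp add: cone_def act_tree_mono)
lemma uncone_mono: "X \<subseteq> Y \<Longrightarrow> uncone \<sigma> \<rho> X \<subseteq> uncone \<sigma> \<rho> Y" by (simp add: uncone_def act_tree_mono)
lemma cone_P: "X \<in> P \<Longrightarrow> cone \<sigma> \<rho> X \<in> P" by (simp add: cone_def P_act)
lemma uncone_P: "X \<in> P \<Longrightarrow> uncone \<sigma> \<rho> X \<in> P" by (simp add: uncone_def P_act)

definition opc :: "(nat \<Rightarrow> bool list set) \<Rightarrow> nat \<Rightarrow> bool list \<Rightarrow> bool list \<Rightarrow> (bool list set \<Rightarrow> bool) \<Rightarrow> (nat \<Rightarrow> bool list set)" where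
  "opc R i \<sigma> \<rho> \<Psi> = (if \<exists>c'. c' \<in> P \<and> c' \<subseteq> cone \<sigma> \<rho> (R i) \<and> \<Psi> c'
      then R(i := uncone \<sigma> \<rho> (SOME c'. c' \<in> P \<and> c' \<subseteq> cone \<sigma> \<rho> (R i) \<and> \<Psi> c')) else R)"

lemma opc_shr: assumes "allP R" shows "shr (opc R i \<sigma> \<rho> \<Psi>) R"
proof (cases "\<exists>c'. c' \<in> P \<and> c' \<subseteq> cone \<sigma> \<rho> (R i) \<and> \<Psi> c'")
  case True
  define c where "c = (SOME c'. c' \<in> P \<and> c' \<subseteq> cone \<sigma> \<rho> (R i) \<and> \<Psi> c')"
  have c: "c \<in> P \<and> c \<subseteq> cone \<sigma> \<rho> (R i) \<and> \<Psi> c" unfolding c_def using True by (rule someI_ex)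
  have "uncone \<sigma> \<rho> c \<subseteq> R i" using uncone_mono[of c "cone \<sigma> \<rho> (R i)" \<sigma> \<rho>] c by simp
  then show ?thesis using True c assms uncone_P unfolding opc_def c_def[symmetric] shr_def allP_def by auto
next
  case False
  have "opc R i \<sigma> \<rho> \<Psi> = R" unfolding opc_def using False by (rule if_not_P)
  then show ?thesis using assms shr_refl by simp
qed

lemma opc_prop: assumes "\<exists>c'. c' \<in> P \<and> c' \<subseteq> cone \<sigma> \<rho> (R i) \<and> \<Psi> c'"
  shows "\<Psi> (cone \<sigma> \<rho> (opc R i \<sigma> \<rho> \<Psi> i))"
proof -
  define c where "c = (SOME c'. c' \<in> P \<and> c' \<subseteq> cone \<sigma> \<rho> (R i) \<and> \<Psi> c')"
  have c: "c \<in> P \<and> c \<subseteq> cone \<sigma> \<rho> (R i) \<and> \<Psi> c" unfolding c_def using assms by (rule someI_ex)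
  have "opc R i \<sigma> \<rho> \<Psi> i = uncone \<sigma> \<rho> c" using assms unfolding opc_def c_def by simp
  then show ?thesis using c by simp
qed

definition opc2 :: "(nat \<Rightarrow> bool list set) \<Rightarrow> nat \<Rightarrow> nat \<Rightarrow> bool list \<Rightarrow> bool list \<Rightarrow> bool list \<Rightarrow> bool list
   \<Rightarrow> (bool list set \<Rightarrow> bool list set \<Rightarrow> bool) \<Rightarrow> (nat \<Rightarrow> bool list set)" where
  "opc2 R i j \<sigma> \<rho> \<tau> \<rho>' \<Psi> = (if \<exists>c' d'. c' \<in> P \<and> c' \<subseteq> cone \<sigma> \<rho> (R i) \<and> d' \<in> P \<and> d' \<subseteq> cone \<tau> \<rho>' (R j) \<and> \<Psi> c' d'
      then (let cd = (SOME cd. fst cd \<in> P \<and> fst cd \<subseteq> cone \<sigma> \<rho> (R i) \<and> snd cd \<in> P \<and> snd cd \<subseteq> cone \<tau> \<rho>' (R j) \<and> \<Psi> (fst cd) (snd cd))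
        in R(i := uncone \<sigma> \<rho> (fst cd), j := uncone \<tau> \<rho>' (snd cd))) else R)"

lemma opc2_main:
  assumes "allP R" "i \<noteq> j"
  shows "shr (opc2 R i j \<sigma> \<rho> \<tau> \<rho>' \<Psi>) R \<and>
    ((\<exists>c' d'. c' \<in> P \<and> c' \<subseteq> cone \<sigma> \<rho> (R i) \<and> d' \<in> P \<and> d' \<subseteq> cone \<tau> \<rho>' (R j) \<and> \<Psi> c' d') \<longrightarrow>
      \<Psi> (cone \<sigma> \<rho> (opc2 R i j \<sigma> \<rho> \<tau> \<rho>' \<Psi> i)) (cone \<tau> \<rho>' (opc2 R i j \<sigma> \<rho> \<tau> \<rho>' \<Psi> j)))"
proof (cases "\<exists>c' d'. c' \<in> P \<and> c' \<subseteq> cone \<sigma> \<rho> (R i) \<and> d' \<in> P \<and> d' \<subseteq> cone \<tau> \<rho>' (R j) \<and> \<Psi> c' d'")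
  case True
  define cd where "cd = (SOME cd. fst cd \<in> P \<and> fst cd \<subseteq> cone \<sigma> \<rho> (R i) \<and> snd cd \<in> P \<and> snd cd \<subseteq> cone \<tau> \<rho>' (R j) \<and> \<Psi> (fst cd) (snd cd))"
  have ex: "\<exists>cd. fst cd \<in> P \<and> fst cd \<subseteq> cone \<sigma> \<rho> (R i) \<and> snd cd \<in> P \<and> snd cd \<subseteq> cone \<tau> \<rho>' (R j) \<and> \<Psi> (fst cd) (snd cd)"
    using True by auto
  have cd: "fst cd \<in> P \<and> fst cd \<subseteq> cone \<sigma> \<rho> (R i) \<and> snd cd \<in> P \<and> snd cd \<subseteq> cone \<tau> \<rho>' (R j) \<and> \<Psi> (fst cd) (snd cd)"
    unfolding cd_def using ex by (rule someI_ex)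
  have eq: "opc2 R i j \<sigma> \<rho> \<tau> \<rho>' \<Psi> = R(i := uncone \<sigma> \<rho> (fst cd), j := uncone \<tau> \<rho>' (snd cd))"
    using True unfolding opc2_def cd_def Let_def by simp
  have s1: "uncone \<sigma> \<rho> (fst cd) \<subseteq> R i" using uncone_mono[of "fst cd" "cone \<sigma> \<rho> (R i)" \<sigma> \<rho>] cd by simp
  have s2: "uncone \<tau> \<rho>' (snd cd) \<subseteq> R j" using uncone_mono[of "snd cd" "cone \<tau> \<rho>' (R j)" \<tau> \<rho>'] cd by simp
  have "shr (opc2 R i j \<sigma> \<rho> \<tau> \<rho>' \<Psi>) R"
    unfolding eq shr_def using assms s1 s2 cd uncone_P by (auto simp: allP_def)
  moreover have "\<Psi> (cone \<sigma> \<rho> (opc2 R i j \<sigma> \<rho> \<tau> \<rho>' \<Psi> i)) (cone \<tau> \<rho>' (opc2 R i j \<sigma> \<rho> \<tau> \<rho>' \<Psi> j))"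
    unfolding eq using assms(2) cd by simp
  ultimately show ?thesis by blast
next
  case False
  have "opc2 R i j \<sigma> \<rho> \<tau> \<rho>' \<Psi> = R" unfolding opc2_def using False by (rule if_not_P)
  then show ?thesis using assms shr_refl False by auto
qed


definition PsiB :: "bool list set set \<Rightarrow> bool list set \<Rightarrow> bool" where
  "PsiB D c' \<longleftrightarrow> (D \<subseteq> P \<and> predense D P \<longrightarrow> (\<exists>S\<in>D. c' \<subseteq> S))"

definition PsiD :: "bool list set \<Rightarrow> bool list set \<Rightarrow> bool" where
  "PsiD T0 c' \<longleftrightarrow> (c' \<subseteq> T0 \<or> (\<exists>s. s \<notin> T0 \<and> (\<forall>x\<in>branches c'. init x (length s) = s)))"

definition cnd :: "((nat \<Rightarrow> bool) \<Rightarrow> (nat \<Rightarrow> bool)) \<Rightarrow> bool list set \<Rightarrow> bool" where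
  "cnd f T0 \<longleftrightarrow> cantor_continuous f \<and> regular_on f T0 P"

definition Psi1 where
  "Psi1 f T0 \<tau> \<rho>B \<rho>A \<sigma> c' \<longleftrightarrow> (c' \<subseteq> T0 \<and> cnd f T0 \<longrightarrow> branches (cone \<tau> \<rho>B (uncone \<sigma> \<rho>A c')) \<inter> f ` branches c' = {})"

definition Psi2 where
  "Psi2 f T0 c' d' \<longleftrightarrow> (c' \<subseteq> T0 \<and> cnd f T0 \<longrightarrow> branches d' \<inter> f ` branches c' = {})"

fun op :: "tsk \<Rightarrow> (nat \<Rightarrow> bool list set) \<Rightarrow> (nat \<Rightarrow> bool list set)" where
  "op (TB k a i A) R = opc R i (sE a) (flips A) (PsiB (dE k))"
| "op (TP k l a b i j A B) R = (let R1 = opc R i (sE a) (flips A) (PsiD (pe l)) in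
     if i = j then opc R1 i (sE a) (flips A) (Psi1 (fE k) (pe l) (sE b) (flips B) (flips A) (sE a))
     else opc2 R1 i j (sE a) (flips A) (sE b) (flips B) (Psi2 (fE k) (pe l)))"

fun Phi :: "tsk \<Rightarrow> (nat \<Rightarrow> bool list set) \<Rightarrow> bool" where
  "Phi (TB k a i A) R = PsiB (dE k) (cone (sE a) (flips A) (R i))"
| "Phi (TP k l a b i j A B) R = ((\<exists>s. s \<notin> pe l \<and> (\<forall>x\<in>branches (cone (sE a) (flips A) (R i)). init x (length s) = s)) \<or>
     (cone (sE a) (flips A) (R i) \<subseteq> pe l \<and> (cnd (fE k) (pe l) \<longrightarrow>
        branches (cone (sE b) (flips B) (R j)) \<inter> fE k ` branches (cone (sE a) (flips A) (R i)) = {})))"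

lemma shr_cone: "shr R' R \<Longrightarrow> cone \<sigma> \<rho> (R' i) \<subseteq> cone \<sigma> \<rho> (R i)"
  by (simp add: shr_def cone_mono)

lemma allP_cone: "allP R \<Longrightarrow> cone \<sigma> \<rho> (R i) \<in> P"
  by (simp add: allP_def cone_P)

lemma Phi_mono: "Phi t R \<Longrightarrow> shr R' R \<Longrightarrow> Phi t R'"
proof (cases t)
  case (TB k a i A)
  assume "Phi t R" "shr R' R"
  then show ?thesis using TB shr_cone[of R' R "sE a" "flips A" i] by (auto simp: PsiB_def)
next
  case (TP k l a b i j A B)
  assume h: "Phi t R" "shr R' R"
  define c where "c = cone (sE a) (flips A) (R i)"
  define c' where "c' = cone (sE a) (flips A) (R' i)"
  define d where "d = cone (sE b) (flips B) (R j)"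
  define d' where "d' = cone (sE b) (flips B) (R' j)"
  have c: "c' \<subseteq> c" using h(2) unfolding c_def c'_def by (rule shr_cone)
  have d: "d' \<subseteq> d" using h(2) unfolding d_def d'_def by (rule shr_cone)
  have bc: "branches c' \<subseteq> branches c" using c by (rule branches_mono)
  have bd: "branches d' \<subseteq> branches d" using d by (rule branches_mono)
  have h1: "(\<exists>s. s \<notin> pe l \<and> (\<forall>x\<in>branches c. init x (length s) = s)) \<or>
     (c \<subseteq> pe l \<and> (cnd (fE k) (pe l) \<longrightarrow> branches d \<inter> fE k ` branches c = {}))"
    using h(1) unfolding TP Phi.simps c_def d_def .
  have "(\<exists>s. s \<notin> pe l \<and> (\<forall>x\<in>branches c'. init x (length s) = s)) \<or>
     (c' \<subseteq> pe l \<and> (cnd (fE k) (pe l) \<longrightarrow> branches d' \<inter> fE k ` branches c' = {}))"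
  proof (cases "\<exists>s. s \<notin> pe l \<and> (\<forall>x\<in>branches c. init x (length s) = s)")
    case True
    then obtain s where "s \<notin> pe l" "\<forall>x\<in>branches c. init x (length s) = s" by blast
    then have "s \<notin> pe l \<and> (\<forall>x\<in>branches c'. init x (length s) = s)" using bc by blast
    then show ?thesis by blast
  next
    case False
    then have 1: "c \<subseteq> pe l" and 2: "cnd (fE k) (pe l) \<longrightarrow> branches d \<inter> fE k ` branches c = {}"
      using h1 by argo+
    have c'pe: "c' \<subseteq> pe l" using 1 c by (rule order_trans[rotated])
    have sub: "branches d' \<inter> fE k ` branches c' \<subseteq> branches d \<inter> fE k ` branches c"
      using bd bc by (intro Int_mono image_mono)
    have "cnd (fE k) (pe l) \<longrightarrow> branches d' \<inter> fE k ` branches c' = {}"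
      using 2 sub by auto
    then show ?thesis using c'pe by argo
  qed
  then show ?thesis unfolding TP Phi.simps c'_def d'_def .
qed

lemma op_shr: "allP R \<Longrightarrow> shr (op t R) R"
proof (cases t)
  case (TB k a i A)
  assume "allP R" then show ?thesis using TB opc_shr by simp
next
  case (TP k l a b i j A B)
  assume R: "allP R"
  define R1 where "R1 = opc R i (sE a) (flips A) (PsiD (pe l))"
  have s1: "shr R1 R" unfolding R1_def using R by (rule opc_shr)
  then have R1: "allP R1" by (rule shr_allP)
  have opg: "op t R = (if i = j then opc R1 i (sE a) (flips A) (Psi1 (fE k) (pe l) (sE b) (flips B) (flips A) (sE a))
     else opc2 R1 i j (sE a) (flips A) (sE b) (flips B) (Psi2 (fE k) (pe l)))"
    unfolding TP R1_def by (simp add: Let_def)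
  show ?thesis
  proof (cases "i = j")
    case True
    then show ?thesis unfolding opg using shr_trans[OF opc_shr[OF R1] s1] by simp
  next
    case False
    then show ?thesis unfolding opg using shr_trans[OF conjunct1[OF opc2_main[OF R1 False]] s1]
      by simp
  qed
qed

lemma exD: assumes "c \<in> P" shows "\<exists>c'. c' \<in> P \<and> c' \<subseteq> c \<and> PsiD T0 c'"
proof (cases "\<exists>R'\<in>P. R' \<subseteq> c \<and> R' \<subseteq> T0")
  case True then show ?thesis by (auto simp: PsiD_def)
next
  case False
  then have "\<not> c \<subseteq> T0" using assms by blast
  then obtain s where s: "s \<in> c" "s \<notin> T0" by blast
  have "restr c s \<in> P" using P_restr assms s by blast
  moreover have "restr c s \<subseteq> c" by (rule restr_sub)
  moreover have "PsiD T0 (restr c s)" unfolding PsiD_def using s branch_restr by blast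
  ultimately show ?thesis by blast
qed

lemma cone_uncone_act: "\<exists>\<psi>. \<forall>X. cone \<tau> \<rho>B (uncone \<sigma> \<rho>A X) = act_tree \<psi> X"
  by (rule exI[of _ "xl \<tau> (xl \<rho>B (xl \<rho>A \<sigma>))"]) (simp add: cone_def uncone_def act_tree_comp)

lemma regular_mono: "regular_on f T0 Q \<Longrightarrow> c \<subseteq> T0 \<Longrightarrow> regular_on f c Q"
  unfolding regular_on_def by blast

lemma Phi_op: assumes R: "allP R" shows "Phi t (op t R)"
proof (cases t)
  case (TB k a i A)
  let ?c = "cone (sE a) (flips A) (R i)"
  have cP: "?c \<in> P" using R by (rule allP_cone)
  have "\<exists>c'. c' \<in> P \<and> c' \<subseteq> ?c \<and> PsiB (dE k) c'"
  proof (cases "dE k \<subseteq> P \<and> predense (dE k) P")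
    case True
    then obtain S R' where "S \<in> dE k" "R' \<in> P" "R' \<subseteq> ?c" "R' \<subseteq> S"
      using cP unfolding predense_def by blast
    then show ?thesis unfolding PsiB_def by blast
  next
    case False then show ?thesis using cP unfolding PsiB_def by blast
  qed
  then show ?thesis using TB opc_prop by simp
next
  case (TP k l a b i j A B)
  define R1 where "R1 = opc R i (sE a) (flips A) (PsiD (pe l))"
  have s1: "shr R1 R" unfolding R1_def using R by (rule opc_shr)
  then have R1: "allP R1" by (rule shr_allP)
  let ?c1 = "cone (sE a) (flips A) (R1 i)"
  have c1P: "?c1 \<in> P" using R1 by (rule allP_cone)
  have D1: "PsiD (pe l) ?c1" unfolding R1_def
    by (rule opc_prop) (rule exD[OF allP_cone[OF R]])
  have opg: "op t R = (if i = j then opc R1 i (sE a) (flips A) (Psi1 (fE k) (pe l) (sE b) (flips B) (flips A) (sE a))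
     else opc2 R1 i j (sE a) (flips A) (sE b) (flips B) (Psi2 (fE k) (pe l)))"
    unfolding TP R1_def by (simp add: Let_def)
  show ?thesis
  proof (cases "i = j")
    case True
    define R2 where "R2 = opc R1 i (sE a) (flips A) (Psi1 (fE k) (pe l) (sE b) (flips B) (flips A) (sE a))"
    have opeq: "op t R = R2" unfolding opg R2_def by (rule if_P[OF True])
    have s2: "shr R2 R1" unfolding R2_def using R1 by (rule opc_shr)
    have ex: "\<exists>c'. c' \<in> P \<and> c' \<subseteq> ?c1 \<and> Psi1 (fE k) (pe l) (sE b) (flips B) (flips A) (sE a) c'"
    proof (cases "?c1 \<subseteq> pe l \<and> cnd (fE k) (pe l)")
      case True
      obtain \<psi> where \<psi>: "\<forall>X. cone (sE b) (flips B) (uncone (sE a) (flips A) X) = act_tree \<psi> X"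
        using cone_uncone_act by blast
      have "regular_on (fE k) ?c1 P" using True regular_mono unfolding cnd_def by blast
      then obtain R'' where R'': "R'' \<in> P" "R'' \<subseteq> ?c1" "branches (act_tree \<psi> R'') \<inter> fE k ` branches R'' = {}"
        using OS[of "fE k" ?c1 \<psi>] c1P True unfolding cnd_def by blast
      then show ?thesis unfolding Psi1_def using \<psi> by metis
    next
      case False then show ?thesis using c1P unfolding Psi1_def by blast
    qed
    let ?c2 = "cone (sE a) (flips A) (R2 i)"
    have P1: "Psi1 (fE k) (pe l) (sE b) (flips B) (flips A) (sE a) ?c2"
      unfolding R2_def using ex by (rule opc_prop)
    have c21: "?c2 \<subseteq> ?c1" using s2 by (rule shr_cone)
    have "Phi t R2"
      using D1 unfolding PsiD_def
    proof (elim disjE exE conjE)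
      fix s assume s: "s \<notin> pe l" "\<forall>x\<in>branches ?c1. init x (length s) = s"
      then have "\<forall>x\<in>branches ?c2. init x (length s) = s" using branches_mono[OF c21] by blast
      then show ?thesis unfolding TP Phi.simps using s(1) by blast
    next
      assume "?c1 \<subseteq> pe l"
      then have "?c2 \<subseteq> pe l" using c21 by blast
      then show ?thesis using TP P1 True unfolding Psi1_def by simp
    qed
    then show ?thesis using opeq by simp
  next
    case False
    define R2 where "R2 = opc2 R1 i j (sE a) (flips A) (sE b) (flips B) (Psi2 (fE k) (pe l))"
    have opeq: "op t R = R2" unfolding opg R2_def by (rule if_not_P[OF False])
    let ?d1 = "cone (sE b) (flips B) (R1 j)"
    have d1P: "?d1 \<in> P" using R1 by (rule allP_cone)
    have ex: "\<exists>c' d'. c' \<in> P \<and> c' \<subseteq> ?c1 \<and> d' \<in> P \<and> d' \<subseteq> ?d1 \<and> Psi2 (fE k) (pe l) c' d'"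
    proof (cases "?c1 \<subseteq> pe l \<and> cnd (fE k) (pe l)")
      case True
      then obtain c' d' where "c' \<in> P" "c' \<subseteq> ?c1" "d' \<in> P" "d' \<subseteq> ?d1" "branches d' \<inter> fE k ` branches c' = {}"
        using TS[OF _ c1P d1P] unfolding cnd_def by blast
      then show ?thesis unfolding Psi2_def by blast
    next
      case False then show ?thesis using c1P d1P unfolding Psi2_def by blast
    qed
    have m: "shr R2 R1 \<and> Psi2 (fE k) (pe l) (cone (sE a) (flips A) (R2 i)) (cone (sE b) (flips B) (R2 j))"
      unfolding R2_def
      using conjunct1[OF opc2_main[OF R1 False, of "sE a" "flips A" "sE b" "flips B" "Psi2 (fE k) (pe l)"]]
        mp[OF conjunct2[OF opc2_main[OF R1 False, of "sE a" "flips A" "sE b" "flips B" "Psi2 (fE k) (pe l)"]] ex]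
      by (rule conjI)
    let ?c2 = "cone (sE a) (flips A) (R2 i)"
    have c21: "?c2 \<subseteq> ?c1" using shr_cone[OF conjunct1[OF m]] .
    have "Phi t R2"
      using D1 unfolding PsiD_def
    proof (elim disjE exE conjE)
      fix s assume s: "s \<notin> pe l" "\<forall>x\<in>branches ?c1. init x (length s) = s"
      then have "\<forall>x\<in>branches ?c2. init x (length s) = s" using branches_mono[OF c21] by blast
      then show ?thesis unfolding TP Phi.simps using s(1) by blast
    next
      assume "?c1 \<subseteq> pe l"
      then have "?c2 \<subseteq> pe l" using c21 by blast
      then show ?thesis using TP m unfolding Psi2_def by simp
    qed
    then show ?thesis using opeq by simp
  qed
qed

fun run :: "tsk list \<Rightarrow> (nat \<Rightarrow> bool list set) \<Rightarrow> (nat \<Rightarrow> bool list set)" where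
  "run [] R = R"
| "run (t # ts) R = run ts (op t R)"

lemma run_main: "allP R \<Longrightarrow> shr (run ts R) R \<and> (\<forall>t\<in>set ts. Phi t (run ts R))"
proof (induction ts arbitrary: R)
  case Nil then show ?case using shr_refl by simp
next
  case (Cons t ts)
  have s: "shr (op t R) R" using Cons.prems by (rule op_shr)
  have ph: "Phi t (op t R)" using Cons.prems by (rule Phi_op)
  have IH: "shr (run ts (op t R)) (op t R) \<and> (\<forall>u\<in>set ts. Phi u (run ts (op t R)))"
    using Cons.IH[OF shr_allP[OF s]] .
  have "Phi t (run ts (op t R))" using Phi_mono[OF ph] IH by blast
  then show ?case using IH shr_trans[OF _ s] by simp
qed

end

context cons
begin

definition tasks :: "nat \<Rightarrow> (nat \<Rightarrow> nat set) \<Rightarrow> tsk list" where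
  "tasks n F = [TB k a i A. k \<leftarrow> [0..<n], a \<leftarrow> [0..<n], i \<leftarrow> [0..<n], A \<leftarrow> lst (Pow (F i))] @
     [TP k l a b i j A B. k \<leftarrow> [0..<n], l \<leftarrow> [0..<n], a \<leftarrow> [0..<n], b \<leftarrow> [0..<n], i \<leftarrow> [0..<n], j \<leftarrow> [0..<n],
        A \<leftarrow> lst (Pow (F i)), B \<leftarrow> lst (Pow (F j))]"

lemma TB_in: "k < n \<Longrightarrow> a < n \<Longrightarrow> i < n \<Longrightarrow> finite (F i) \<Longrightarrow> A \<subseteq> F i \<Longrightarrow> TB k a i A \<in> set (tasks n F)"
  unfolding tasks_def by (simp add: image_iff set_lst)

lemma TP_in: "k < n \<Longrightarrow> l < n \<Longrightarrow> a < n \<Longrightarrow> b < n \<Longrightarrow> i < n \<Longrightarrow> j < n \<Longrightarrow> finite (F i) \<Longrightarrow> finite (F j) \<Longrightarrow>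
   A \<subseteq> F i \<Longrightarrow> B \<subseteq> F j \<Longrightarrow> TP k l a b i j A B \<in> set (tasks n F)"
  unfolding tasks_def by (simp add: image_iff set_lst)

primrec gen :: "nat \<Rightarrow> (nat \<Rightarrow> bool list set) \<times> (nat \<Rightarrow> nat set)" where
  "gen 0 = (pe, \<lambda>_. {})"
| "gen (Suc n) = (let F = (\<lambda>i. insert (firstfree (fst (gen n) i)) (snd (gen n) i))
     in (run (tasks n F) (\<lambda>i. frz (fst (gen n) i)), F))"

lemma gen_F: "snd (gen (Suc n)) i = insert (firstfree (fst (gen n) i)) (snd (gen n) i)"
  by (simp add: Let_def)

lemma gen_R: "fst (gen (Suc n)) = run (tasks n (snd (gen (Suc n)))) (\<lambda>i. frz (fst (gen n) i))"
  by (simp add: Let_def)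

lemma frz_P: "R \<in> P \<Longrightarrow> frz R \<in> P"
  unfolding frz_def by (rule P_restr) (auto intro: frz_mem P_silver)

lemma gen_inv: "allP (fst (gen n)) \<and> (\<forall>i. finite (snd (gen n) i))"
proof (induction n)
  case 0 then show ?case by (simp add: allP_def pe_P)
next
  case (Suc n)
  have "allP (\<lambda>i. frz (fst (gen n) i))" using Suc frz_P by (simp add: allP_def)
  then have "allP (fst (gen (Suc n)))" unfolding gen_R using run_main shr_allP by blast
  moreover have "\<forall>i. finite (snd (gen (Suc n)) i)" using Suc gen_F by simp
  ultimately show ?case by blast
qed

lemma gen_step: "shr (fst (gen (Suc n))) (\<lambda>i. frz (fst (gen n) i)) \<and>
   (\<forall>t\<in>set (tasks n (snd (gen (Suc n)))). Phi t (fst (gen (Suc n))))"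
proof -
  have "allP (\<lambda>i. frz (fst (gen n) i))" using gen_inv frz_P by (simp add: allP_def)
  then show ?thesis unfolding gen_R by (rule run_main)
qed

definition Rn :: "nat \<Rightarrow> nat \<Rightarrow> bool list set" where "Rn i n = fst (gen n) i"
definition Fn :: "nat \<Rightarrow> nat \<Rightarrow> nat set" where "Fn i n = snd (gen n) i"
definition pn :: "nat \<Rightarrow> nat \<Rightarrow> nat" where "pn i n = firstfree (Rn i n)"

lemma Rn_P: "Rn i n \<in> P" using gen_inv by (simp add: Rn_def allP_def)
lemma Rn_silver: "silver_tree (Rn i n)" using Rn_P P_silver by blast
lemma Fn_fin: "finite (Fn i n)" using gen_inv by (simp add: Fn_def)

lemma Rn_frz: "Rn i (Suc n) \<subseteq> frz (Rn i n)"
  using gen_step unfolding shr_def Rn_def by blast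

lemma Rn_Suc: "Rn i (Suc n) \<subseteq> Rn i n"
  using Rn_frz frz_sub by blast

lemma Rn_anti: "n \<le> m \<Longrightarrow> Rn i m \<subseteq> Rn i n"
proof (induction m rule: dec_induct)
  case base then show ?case by simp
next
  case (step m) then show ?case using Rn_Suc by blast
qed

lemma pn_less: "pn i n < pn i (Suc n)"
proof -
  have "pn i n < firstfree (frz (Rn i n))" unfolding pn_def using frz_firstfree Rn_silver by blast
  also have "\<dots> \<le> pn i (Suc n)" unfolding pn_def using firstfree_mono[OF Rn_silver Rn_frz] .
  finally show ?thesis .
qed

lemma pn_sm: "strict_mono (pn i)" unfolding strict_mono_Suc_iff using pn_less by blast

lemma pn_ge: "n \<le> pn i n" using strict_mono_imp_increasing[OF pn_sm] .

lemma Fn_eq: "Fn i n = pn i ` {..<n}"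
proof (induction n)
  case 0 then show ?case by (simp add: Fn_def)
next
  case (Suc n)
  have "Fn i (Suc n) = insert (pn i n) (Fn i n)" unfolding Fn_def pn_def Rn_def using gen_F by simp
  then show ?case using Suc by (simp add: lessThan_Suc)
qed

lemma pn_notin: "pn i m \<notin> Fn i m"
proof
  assume "pn i m \<in> Fn i m"
  then obtain k where "k < m" "pn i m = pn i k" unfolding Fn_eq by auto
  then show False using pn_sm[of i] by (metis less_irrefl strict_mono_less)
qed

lemma Fn_Suc: "Fn i (Suc m) = insert (pn i m) (Fn i m)"
  unfolding Fn_eq by (simp add: lessThan_Suc)

lemma K4: "n \<le> m \<Longrightarrow> A \<subseteq> Fn i m - Fn i n \<Longrightarrow> act_tree (flips A) (Rn i m) \<subseteq> Rn i n"
proof (induction m arbitrary: A rule: dec_induct)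
  case base then show ?case by simp
next
  case (step m)
  let ?p = "pn i m"
  have finA: "finite A" using step.prems Fn_fin finite_subset by blast
  show ?case
  proof (cases "?p \<in> A")
    case False
    then have "A \<subseteq> Fn i m - Fn i n" using step.prems Fn_Suc by auto
    then have "act_tree (flips A) (Rn i m) \<subseteq> Rn i n" by (rule step.IH)
    moreover have "act_tree (flips A) (Rn i (Suc m)) \<subseteq> act_tree (flips A) (Rn i m)"
      by (rule act_tree_mono[OF Rn_Suc])
    ultimately show ?thesis by blast
  next
    case True
    define A' where "A' = A - {?p}"
    have A: "A = insert ?p A'" "?p \<notin> A'" "finite A'" using True finA A'_def by auto
    have A'sub: "A' \<subseteq> Fn i m - Fn i n" using step.prems Fn_Suc A'_def by auto
    have "act_tree (flips A) (Rn i (Suc m)) = act_tree (flips A') (act_tree (flips {?p}) (Rn i (Suc m)))"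
      using act_flips_insert[OF A(3) A(2)] A(1) by simp
    also have "\<dots> \<subseteq> act_tree (flips A') (act_tree (flips {?p}) (Rn i m))"
      by (intro act_tree_mono Rn_Suc)
    also have "act_tree (flips {?p}) (Rn i m) = Rn i m"
      using act_free[OF Rn_silver] firstfree_in[OF Rn_silver] pn_def by simp
    also have "act_tree (flips A') (Rn i m) \<subseteq> Rn i n" using A'sub by (rule step.IH)
    finally show ?thesis .
  qed
qed

definition zz :: "nat \<Rightarrow> nat \<Rightarrow> bool" where "zz i j = zval (Rn i (Suc j)) j"

lemma K2: "Suc j \<le> m \<Longrightarrow> zval (Rn i m) j = zz i j"
proof -
  assume m: "Suc j \<le> m"
  have "j < pn i (Suc j)" using pn_ge[of "Suc j" i] by simp
  then have "j \<notin> Kset (Rn i (Suc j))" unfolding pn_def by (rule below_firstfree)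
  then show ?thesis unfolding zz_def by (rule zval_mono[OF Rn_silver Rn_silver Rn_anti[OF m]])
qed

lemma LemY:
  assumes y: "\<And>j. j \<notin> range (pn i) - Fn i n \<Longrightarrow> y j = zz i j"
  shows "y \<in> branches (Rn i n)"
  unfolding branches_def
proof (intro CollectI allI)
  fix L
  define m where "m = Suc (n + L)"
  have nm: "n \<le> m" and Lm: "L < m" using m_def by auto
  have c: "Rn i m = ST (zval (Rn i m)) (Kset (Rn i m))" using canon Rn_silver by blast
  have "init (zz i) L \<in> ST (zval (Rn i m)) (Kset (Rn i m))"
    unfolding init_ST using K2 Lm by auto
  then have z0: "init (zz i) L \<in> Rn i m" using c by simp
  define B where "B = {j. j < L \<and> j \<in> Fn i m - Fn i n \<and> y j \<noteq> zz i j}"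
  have finB: "finite B" unfolding B_def by simp
  have Bsub: "B \<subseteq> Fn i m - Fn i n" unfolding B_def by blast
  have eq: "act_str (flips B) (init (zz i) L) = init y L"
  proof (rule nth_equalityI)
    show "length (act_str (flips B) (init (zz i) L)) = length (init y L)" by simp
    fix j assume "j < length (act_str (flips B) (init (zz i) L))"
    then have j: "j < L" by simp
    have "(zz i j \<noteq> (j \<in> B)) = y j"
    proof (cases "j \<in> B")
      case True then show ?thesis unfolding B_def by auto
    next
      case False
      have "y j = zz i j"
      proof (cases "j \<in> Fn i m - Fn i n")
        case True then show ?thesis using False j unfolding B_def by auto
      next
        case nF: False
        have "j \<notin> range (pn i) - Fn i n"
        proof
          assume "j \<in> range (pn i) - Fn i n"
          then obtain k where k: "j = pn i k" "j \<notin> Fn i n" by auto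
          have "k < m" using pn_ge[of k i] k j Lm by simp
          then have "j \<in> Fn i m" unfolding Fn_eq using k by auto
          then show False using nF k by auto
        qed
        then show ?thesis by (rule y)
      qed
      then show ?thesis using False by simp
    qed
    then show "act_str (flips B) (init (zz i) L) ! j = init y L ! j"
      using j by (simp add: bitl_flips[OF finB])
  qed
  have "init y L \<in> act_tree (flips B) (Rn i m)"
    unfolding mem_act_tree using z0 eq[symmetric] by (metis act_str_invol)
  then show "init y L \<in> Rn i n" using K4[OF nm Bsub] by blast
qed

definition U :: "nat \<Rightarrow> bool list set" where "U i = ST (zz i) (range (pn i))"

lemma U_silver: "silver_tree (U i)"
  unfolding U_def by (rule ST_silver_tree) (rule range_inj_infinite[OF strict_mono_imp_inj_on[OF pn_sm]])

lemma U3: "x \<in> branches (U i) \<Longrightarrow> \<exists>A. A \<subseteq> Fn i n \<and> x \<in> branches (act_tree (flips A) (Rn i n))"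
proof -
  assume x: "x \<in> branches (U i)"
  define A where "A = {j \<in> Fn i n. x j \<noteq> zz i j}"
  have finA: "finite A" using Fn_fin A_def by simp
  define y where "y = act_real (flips A) x"
  have "y \<in> branches (Rn i n)"
  proof (rule LemY)
    fix j assume j: "j \<notin> range (pn i) - Fn i n"
    show "y j = zz i j"
    proof (cases "j \<in> Fn i n")
      case True
      have "j \<in> A \<longleftrightarrow> x j \<noteq> zz i j" using True A_def by blast
      then show ?thesis unfolding y_def by (auto simp: act_real_bit bitl_flips[OF finA])
    next
      case False
      then have "j \<notin> range (pn i)" using j by blast
      then have "x j = zz i j" using x unfolding U_def branches_ST by blast
      moreover have "j \<notin> A" using False A_def by blast
      ultimately show ?thesis unfolding y_def by (simp add: act_real_bit bitl_flips[OF finA])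
    qed
  qed
  then have "x \<in> branches (act_tree (flips A) (Rn i n))"
    unfolding branches_act y_def by (metis act_real_invol image_eqI)
  moreover have "A \<subseteq> Fn i n" unfolding A_def by blast
  ultimately show ?thesis by blast
qed

lemma U_sub: "U i \<subseteq> pe i"
proof -
  have "branches (U i) \<subseteq> branches (Rn i 0)"
  proof
    fix x assume "x \<in> branches (U i)"
    then show "x \<in> branches (Rn i 0)"
      by (intro LemY) (auto simp: U_def branches_ST Fn_def)
  qed
  moreover have "Rn i 0 = pe i" by (simp add: Rn_def)
  ultimately show ?thesis using silver_sub U_silver by metis
qed

end

context cons
begin

definition Q :: "bool list set set" where
  "Q = {act_tree \<sigma> (restr (U i) s) | i \<sigma> s. s \<in> U i}"

lemma Q_silver: "T \<in> Q \<Longrightarrow> silver_tree T"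
  unfolding Q_def using silver_act silver_restr(1) U_silver by blast

lemma Q_count: "countable Q"
proof -
  have "Q \<subseteq> (\<lambda>(i, \<sigma>, s). act_tree \<sigma> (restr (U i) s)) ` UNIV" unfolding Q_def by auto
  moreover have "countable ((\<lambda>(i, \<sigma>, s). act_tree \<sigma> (restr (U i) s)) ` (UNIV :: (nat \<times> bool list \<times> bool list) set))"
    by (rule countable_image) (rule countableI_type)
  ultimately show ?thesis by (rule countable_subset)
qed

lemma Q_forcing: "silver_forcing Q"
  unfolding silver_forcing_def
proof (intro conjI ballI allI)
  fix T assume "T \<in> Q" then show "silver_tree T" by (rule Q_silver)
next
  fix T u assume T: "T \<in> Q" and u: "u \<in> T"
  then obtain i \<sigma> s where Ts: "T = act_tree \<sigma> (restr (U i) s)" "s \<in> U i" unfolding Q_def by blast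
  define v where "v = act_str \<sigma> u"
  have v: "v \<in> restr (U i) s" using u Ts mem_act_tree v_def by blast
  have r: "restr T u = act_tree \<sigma> (restr (restr (U i) s) v)" unfolding Ts v_def by (rule restr_act)
  have vU: "v \<in> U i" and c: "prefix s v \<or> prefix v s" using v by (auto simp: restr_def)
  show "restr T u \<in> Q"
  proof (cases "prefix s v")
    case True
    then have "restr T u = act_tree \<sigma> (restr (U i) v)" using r restr_restr1 by simp
    then show ?thesis unfolding Q_def using vU by blast
  next
    case False
    then have "prefix v s" using c by blast
    then have "restr T u = act_tree \<sigma> (restr (U i) s)" using r restr_restr2 by simp
    then show ?thesis unfolding Q_def using Ts(2) by blast
  qed
next
  fix T \<sigma>' assume "T \<in> Q"
  then obtain i \<sigma> s where Ts: "T = act_tree \<sigma> (restr (U i) s)" "s \<in> U i" unfolding Q_def by blast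
  have "act_tree \<sigma>' T = act_tree (xl \<sigma>' \<sigma>) (restr (U i) s)" unfolding Ts by (rule act_tree_comp)
  then show "act_tree \<sigma>' T \<in> Q" unfolding Q_def using Ts(2) by blast
qed

lemma branches_cone: "x0 \<in> branches (act_tree \<rho> X) \<Longrightarrow> act_real \<sigma> x0 \<in> branches (cone \<sigma> \<rho> X)"
  unfolding cone_def branches_act[of \<sigma>] by blast

lemma Q_decomp:
  assumes "T \<in> Q"
  obtains i \<sigma> s where "T = act_tree \<sigma> (restr (U i) s)" "s \<in> U i"
  using assms unfolding Q_def by blast

lemma Q_branch:
  assumes "x \<in> branches (act_tree \<sigma> (restr (U i) s))"
  shows "\<exists>A. A \<subseteq> Fn i N \<and> x \<in> branches (cone \<sigma> (flips A) (Rn i N))"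
proof -
  obtain x0 where x0: "x0 \<in> branches (restr (U i) s)" "x = act_real \<sigma> x0"
    using assms branches_act by blast
  then have "x0 \<in> branches (U i)" using branches_restr_sub by blast
  then obtain A where A: "A \<subseteq> Fn i N" "x0 \<in> branches (act_tree (flips A) (Rn i N))" using U3 by blast
  then show ?thesis using branches_cone x0(2) by blast
qed

lemma Phi_at: "t \<in> set (tasks n (\<lambda>i. Fn i (Suc n))) \<Longrightarrow> Phi t (\<lambda>i. Rn i (Suc n))"
proof -
  assume "t \<in> set (tasks n (\<lambda>i. Fn i (Suc n)))"
  moreover have "(\<lambda>i. Fn i (Suc n)) = snd (gen (Suc n))" by (simp add: Fn_def[abs_def])
  moreover have "(\<lambda>i. Rn i (Suc n)) = fst (gen (Suc n))" by (simp add: Rn_def[abs_def])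
  ultimately show ?thesis using gen_step by simp
qed

lemma main: "sqsub Dfam Ffam P Q"
  unfolding sqsub_def
proof (intro conjI ballI impI allI)
  fix T assume "T \<in> Q \<union> P"
  then show "\<exists>U\<in>Q. U \<subseteq> T"
  proof
    assume "T \<in> Q" then show ?thesis by blast
  next
    assume "T \<in> P"
    then obtain i where i: "pe i = T" using pe_surj by blast
    have "U i \<in> Q" unfolding Q_def using act_nil restr_nil
      by (metis (mono_tags, lifting) U_def mem_Collect_eq mem_ST length_0_conv less_zeroE)
    then show ?thesis using U_sub i by blast
  qed
next
  fix D T assume D: "D \<in> Dfam" "D \<subseteq> P" "predense D P" and T: "T \<in> Q"
  obtain i \<sigma> s where Ts: "T = act_tree \<sigma> (restr (U i) s)" "s \<in> U i" using Q_decomp[OF T] by blast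
  obtain k where k: "dE k = D" using dE_surj D(1) by blast
  obtain a where a: "sE a = \<sigma>" using sE_surj by blast
  define n where "n = Suc (k + a + i)"
  define N where "N = Suc n"
  have cov: "\<exists>S\<in>D. cone \<sigma> (flips A) (Rn i N) \<subseteq> S" if A: "A \<subseteq> Fn i N" for A
  proof -
    have "TB k a i A \<in> set (tasks n (\<lambda>i. Fn i (Suc n)))"
      by (rule TB_in) (use A Fn_fin in \<open>auto simp: n_def N_def\<close>)
    then have "Phi (TB k a i A) (\<lambda>i. Rn i (Suc n))" by (rule Phi_at)
    then show ?thesis using D k a unfolding N_def by (simp add: PsiB_def)
  qed
  define g where "g = (\<lambda>A. SOME S. S \<in> D \<and> cone \<sigma> (flips A) (Rn i N) \<subseteq> S)"
  have g: "g A \<in> D \<and> cone \<sigma> (flips A) (Rn i N) \<subseteq> g A" if "A \<subseteq> Fn i N" for A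
    unfolding g_def using cov[OF that] by (metis (mono_tags, lifting) someI_ex)
  define D' where "D' = g ` Pow (Fn i N)"
  have fin: "finite D'" unfolding D'_def using Fn_fin by simp
  have DD: "D' \<subseteq> D"
  proof
    fix S assume "S \<in> D'"
    then obtain A where A: "S = g A" "A \<in> Pow (Fn i N)" unfolding D'_def by (rule imageE)
    have "A \<subseteq> Fn i N" using A(2) by simp
    then have "g A \<in> D" using g by blast
    then show "S \<in> D" unfolding A(1) .
  qed
  have br: "branches T \<subseteq> branches (\<Union>D')"
  proof
    fix x assume "x \<in> branches T"
    then obtain A where A: "A \<subseteq> Fn i N" "x \<in> branches (cone \<sigma> (flips A) (Rn i N))"
      using Q_branch[of x \<sigma> i s N] Ts(1) by blast
    have gA: "g A \<in> D'" using A(1) unfolding D'_def by blast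
    have "cone \<sigma> (flips A) (Rn i N) \<subseteq> g A" using conjunct2[OF g[OF A(1)]] .
    then have "cone \<sigma> (flips A) (Rn i N) \<subseteq> \<Union>D'" using gA by (rule subset_trans[OF _ Union_upper])
    then show "x \<in> branches (\<Union>D')" using A(2) branches_mono by blast
  qed
  then have Tsub: "T \<subseteq> \<Union>D'" using silver_sub[OF Q_silver[OF T]] by blast
  show "\<exists>D'. finite D' \<and> D' \<subseteq> D \<and> T \<subseteq> \<Union>D'" using fin DD Tsub by blast
next
  fix T0 f U' V
  assume T0: "T0 \<in> P" and f: "f \<in> Ffam" and cc: "cantor_continuous f" and reg: "regular_on f T0 P"
    and U': "U' \<in> Q" and V: "V \<in> Q" and sub: "U' \<subseteq> T0"
  obtain i \<sigma> s where Us: "U' = act_tree \<sigma> (restr (U i) s)" using Q_decomp[OF U'] by blast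
  obtain j \<tau> s' where Vs: "V = act_tree \<tau> (restr (U j) s')" using Q_decomp[OF V] by blast
  obtain k where k: "fE k = f" using fE_surj f by blast
  obtain l where l: "pe l = T0" using pe_surj T0 by blast
  obtain a where a: "sE a = \<sigma>" using sE_surj by blast
  obtain b where b: "sE b = \<tau>" using sE_surj by blast
  define n where "n = Suc (k + l + a + b + i + j)"
  define N where "N = Suc n"
  show "branches V \<inter> f ` branches U' = {}"
  proof (rule ccontr)
    assume "branches V \<inter> f ` branches U' \<noteq> {}"
    then obtain x where x: "x \<in> branches U'" "f x \<in> branches V" by blast
    have x1: "x \<in> branches (act_tree \<sigma> (restr (U i) s))" using x(1) Us by simp
    from Q_branch[OF x1] obtain A where A: "A \<subseteq> Fn i N" "x \<in> branches (cone \<sigma> (flips A) (Rn i N))"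
      by blast
    have x2: "f x \<in> branches (act_tree \<tau> (restr (U j) s'))" using x(2) Vs by simp
    from Q_branch[OF x2] obtain B where B: "B \<subseteq> Fn j N" "f x \<in> branches (cone \<tau> (flips B) (Rn j N))"
      by blast
    have "TP k l a b i j A B \<in> set (tasks n (\<lambda>i. Fn i (Suc n)))"
      by (rule TP_in) (use A B Fn_fin in \<open>auto simp: n_def N_def\<close>)
    then have ph: "Phi (TP k l a b i j A B) (\<lambda>i. Rn i (Suc n))" by (rule Phi_at)
    have xT0: "x \<in> branches T0" using x(1) sub branches_mono by blast
    have cnd: "cnd f T0" using cc reg by (simp add: cnd_def)
    from ph show False unfolding Phi.simps k l a b N_def[symmetric]
    proof (elim disjE exE conjE)
      fix s0 assume s0: "s0 \<notin> T0" "\<forall>x\<in>branches (cone \<sigma> (flips A) (Rn i N)). init x (length s0) = s0"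
      then have "init x (length s0) = s0" using A(2) by blast
      moreover have "init x (length s0) \<in> T0" using xT0 by (simp add: branches_def)
      ultimately show False using s0(1) by simp
    next
      assume "cnd f T0 \<longrightarrow> branches (cone \<tau> (flips B) (Rn j N)) \<inter> f ` branches (cone \<sigma> (flips A) (Rn i N)) = {}"
      then show False using cnd A(2) B(2) by blast
    qed
  qed
qed

end

theorem theorem8p3:
  fixes P :: "bool list set set"
    and Dfam :: "bool list set set set"
    and Ffam :: "((nat \<Rightarrow> bool) \<Rightarrow> (nat \<Rightarrow> bool)) set"
  assumes "silver_forcing P"
    and "countable P"
    and "countable Dfam"
    and "countable Ffam"
  shows "\<exists>Q. countable Q \<and> silver_forcing Q \<and> sqsub Dfam Ffam P Q"
proof (cases "P = {}")
  case True
  have "countable ({} :: bool list set set)" by simp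
  moreover have "silver_forcing {}" by (simp add: silver_forcing_def)
  moreover have "sqsub Dfam Ffam P {}" using True by (simp add: sqsub_def)
  ultimately show ?thesis by blast
next
  case False
  interpret c: cons P Dfam Ffam using assms False by unfold_locales
  show ?thesis using c.Q_count c.Q_forcing c.main by blast
qed

end
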